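(* Let $G=(V,E)$ be a finite graph (parallel edges and loops allowed), $e\neq f$ edges of $G$, and $E^{ef}=E\setminus\{e,f\}$. For each paracel $\gamma\subseteq E^{ef}$ there is exactly one choice of a subset $\beta\subseteq E^{ef}$ disjoint from $\gamma$ and a monomial $\mathbf{m}\in B_{\beta,\gamma}$ such that $\mathbf{x}^{\beta}\mathbf{x}^{\gamma}\mathbf{m}=\prod_{g\in E^{ef}}x_g$.
   Context: For $F\subseteq E$, $\mathbf{x}^F=\prod_{g\in F}x_g$ and $k(F)$ is the number of connected components of the spanning subgraph $(V,F)$. A subset $F\subseteq E^{ef}$ is a paracel if $e$ and $f$ both join the same two distinct connected components of $(V,F)$; equivalently $(V,F+e)$ and $(V,F+f)$ have the same connected components and $k(F+e)=k(F+f)=k(F)-1$. For a paracel $F$, an edge of $E^{ef}\setminus F$ is a smoot for $F$ if it joins the same two components of $(V,F)$ as $e$ and $f$. For disjoint $\beta,\gamma\subseteq E^{ef}$, a subset $\alpha\subseteq E^{ef}$ is compatible with $\beta,\gamma$ if $\alpha$ is disjoint from $\beta$ and $\gamma$, $\gamma\cup\alpha$ is a paracel, and every edge of $\beta$ is a smoot for $\gamma\cup\alpha$; $A_{\beta,\gamma}$ is the set of compatible $\alpha$. Elements $\alpha,\alpha'\in A_{\beta,\gamma}$ (possibly equal) are twins if $\alpha\cap\alpha'\in A_{\beta,\gamma}$, and $B_{\beta,\gamma}$ is the set of distinct monomials $\mathbf{x}^{\alpha}\mathbf{x}^{\alpha'}$ with $\alpha,\alpha'$ twins in $A_{\beta,\gamma}$.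 *)

theory Defs
  imports Main "HOL-Library.Multiset"
begin

text \<open>A finite multigraph (parallel edges and loops allowed) is given by a vertex set V,
an edge set E and an endpoint map ends assigning to every edge its (unordered) pair of
endpoints, encoded as an ordered pair; a loop has ends g = (v, v).
Monomials in the commuting variables x_g are encoded as multisets of edges.\<close>

definition graph :: "'v set \<Rightarrow> 'e set \<Rightarrow> ('e \<Rightarrow> 'v \<times> 'v) \<Rightarrow> bool" where
  "graph V E ends \<longleftrightarrow> finite V \<and> finite E \<and>
     (\<forall>g\<in>E. fst (ends g) \<in> V \<and> snd (ends g) \<in> V)"

definition adj :: "('e \<Rightarrow> 'v \<times> 'v) \<Rightarrow> 'e set \<Rightarrow> ('v \<times> 'v) set" where
  "adj ends F = {(a, b). \<exists>g\<in>F. ends g = (a, b) \<or> ends g = (b, a)}"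

definition comp :: "'v set \<Rightarrow> ('e \<Rightarrow> 'v \<times> 'v) \<Rightarrow> 'e set \<Rightarrow> 'v \<Rightarrow> 'v set" where
  "comp V ends F u = {w \<in> V. (u, w) \<in> (adj ends F)\<^sup>*}"

definition joined :: "'v set \<Rightarrow> ('e \<Rightarrow> 'v \<times> 'v) \<Rightarrow> 'e set \<Rightarrow> 'e \<Rightarrow> 'v set set" where
  "joined V ends F g = {comp V ends F (fst (ends g)), comp V ends F (snd (ends g))}"

definition Eef :: "'e set \<Rightarrow> 'e \<Rightarrow> 'e \<Rightarrow> 'e set" where
  "Eef E e f = E - {e, f}"

definition paracel :: "'v set \<Rightarrow> 'e set \<Rightarrow> ('e \<Rightarrow> 'v \<times> 'v) \<Rightarrow> 'e \<Rightarrow> 'e \<Rightarrow> 'e set \<Rightarrow> bool" where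
  "paracel V E ends e f F \<longleftrightarrow> F \<subseteq> Eef E e f \<and>
     comp V ends F (fst (ends e)) \<noteq> comp V ends F (snd (ends e)) \<and>
     joined V ends F f = joined V ends F e"

definition smoot :: "'v set \<Rightarrow> 'e set \<Rightarrow> ('e \<Rightarrow> 'v \<times> 'v) \<Rightarrow> 'e \<Rightarrow> 'e \<Rightarrow> 'e set \<Rightarrow> 'e \<Rightarrow> bool" where
  "smoot V E ends e f F g \<longleftrightarrow> g \<in> Eef E e f - F \<and> joined V ends F g = joined V ends F e"

definition compatible ::
  "'v set \<Rightarrow> 'e set \<Rightarrow> ('e \<Rightarrow> 'v \<times> 'v) \<Rightarrow> 'e \<Rightarrow> 'e \<Rightarrow> 'e set \<Rightarrow> 'e set \<Rightarrow> 'e set \<Rightarrow> bool" where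
  "compatible V E ends e f \<beta> \<gamma> \<alpha> \<longleftrightarrow> \<alpha> \<subseteq> Eef E e f \<and> \<alpha> \<inter> \<beta> = {} \<and> \<alpha> \<inter> \<gamma> = {} \<and>
     paracel V E ends e f (\<gamma> \<union> \<alpha>) \<and> (\<forall>g\<in>\<beta>. smoot V E ends e f (\<gamma> \<union> \<alpha>) g)"

definition Aset :: "'v set \<Rightarrow> 'e set \<Rightarrow> ('e \<Rightarrow> 'v \<times> 'v) \<Rightarrow> 'e \<Rightarrow> 'e \<Rightarrow> 'e set \<Rightarrow> 'e set \<Rightarrow> 'e set set" where
  "Aset V E ends e f \<beta> \<gamma> = {\<alpha>. compatible V E ends e f \<beta> \<gamma> \<alpha>}"

definition xmon :: "'e set \<Rightarrow> 'e multiset" where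
  "xmon F = mset_set F"

definition twins :: "'v set \<Rightarrow> 'e set \<Rightarrow> ('e \<Rightarrow> 'v \<times> 'v) \<Rightarrow> 'e \<Rightarrow> 'e \<Rightarrow> 'e set \<Rightarrow> 'e set \<Rightarrow> 'e set \<Rightarrow> 'e set \<Rightarrow> bool" where
  "twins V E ends e f \<beta> \<gamma> \<alpha> \<alpha>' \<longleftrightarrow> \<alpha> \<in> Aset V E ends e f \<beta> \<gamma> \<and> \<alpha>' \<in> Aset V E ends e f \<beta> \<gamma> \<and>
     \<alpha> \<inter> \<alpha>' \<in> Aset V E ends e f \<beta> \<gamma>"

definition Bset :: "'v set \<Rightarrow> 'e set \<Rightarrow> ('e \<Rightarrow> 'v \<times> 'v) \<Rightarrow> 'e \<Rightarrow> 'e \<Rightarrow> 'e set \<Rightarrow> 'e set \<Rightarrow> 'e multiset set" where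
  "Bset V E ends e f \<beta> \<gamma> = {xmon \<alpha> + xmon \<alpha>' | \<alpha> \<alpha>'. twins V E ends e f \<beta> \<gamma> \<alpha> \<alpha>'}"

end

theory Submission
  imports Defs
begin

lemma adj_sym: "(x,y) \<in> adj ends F \<Longrightarrow> (y,x) \<in> adj ends F"
  unfolding adj_def by auto

lemma adj_rt_sym: "(x,y) \<in> (adj ends F)\<^sup>* \<Longrightarrow> (y,x) \<in> (adj ends F)\<^sup>*"
proof -
  have "sym (adj ends F)" by (auto intro: symI adj_sym)
  then have "sym ((adj ends F)\<^sup>*)" by (rule sym_rtrancl)
  then show "(x,y) \<in> (adj ends F)\<^sup>* \<Longrightarrow> (y,x) \<in> (adj ends F)\<^sup>*" by (rule symD)
qed

lemma comp_eq: "x \<in> comp V ends F y \<Longrightarrow> comp V ends F x = comp V ends F y"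
proof -
  assume "x \<in> comp V ends F y"
  then have yx: "(y,x) \<in> (adj ends F)\<^sup>*" unfolding comp_def by auto
  then have xy: "(x,y) \<in> (adj ends F)\<^sup>*" by (rule adj_rt_sym)
  show ?thesis unfolding comp_def
    using yx xy by (auto intro: rtrancl_trans)
qed

lemma adj_mono: "F \<subseteq> F' \<Longrightarrow> (adj ends F)\<^sup>* \<subseteq> (adj ends F')\<^sup>*"
  by (rule rtrancl_mono) (auto simp: adj_def)

lemma comp_self: "x \<in> V \<Longrightarrow> x \<in> comp V ends F x"
  unfolding comp_def by auto

lemma comp_lift:
  assumes "\<gamma> \<subseteq> F" "x \<in> V" "comp V ends \<gamma> x = comp V ends \<gamma> y"
  shows "comp V ends F x = comp V ends F y"
proof -
  have "x \<in> comp V ends \<gamma> y" using comp_self[OF assms(2), of ends \<gamma>] assms(3) by simp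
  then have "(y,x) \<in> (adj ends \<gamma>)\<^sup>*" unfolding comp_def by auto
  then have "(y,x) \<in> (adj ends F)\<^sup>*" using adj_mono[OF assms(1)] by auto
  then have "x \<in> comp V ends F y" using assms(2) unfolding comp_def by auto
  then show ?thesis by (rule comp_eq)
qed

lemma joined_lift:
  assumes "graph V E ends" "g \<in> E" "h \<in> E" "\<gamma> \<subseteq> F"
    "joined V ends \<gamma> g = joined V ends \<gamma> h"
  shows "joined V ends F g = joined V ends F h"
proof -
  have V: "fst (ends g) \<in> V" "snd (ends g) \<in> V" "fst (ends h) \<in> V" "snd (ends h) \<in> V"
    using assms(1-3) unfolding graph_def by auto
  let ?c = "comp V ends \<gamma>" and ?d = "comp V ends F"
  from assms(5) have "(?c (fst (ends g)) = ?c (fst (ends h)) \<and> ?c (snd (ends g)) = ?c (snd (ends h))) \<or>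
     (?c (fst (ends g)) = ?c (snd (ends h)) \<and> ?c (snd (ends g)) = ?c (fst (ends h)))"
    unfolding joined_def doubleton_eq_iff .
  then show ?thesis
  proof
    assume c: "?c (fst (ends g)) = ?c (fst (ends h)) \<and> ?c (snd (ends g)) = ?c (snd (ends h))"
    have "?d (fst (ends g)) = ?d (fst (ends h))" by (rule comp_lift[OF assms(4) V(1)]) (use c in simp)
    moreover have "?d (snd (ends g)) = ?d (snd (ends h))" by (rule comp_lift[OF assms(4) V(2)]) (use c in simp)
    ultimately show ?thesis unfolding joined_def by simp
  next
    assume c: "?c (fst (ends g)) = ?c (snd (ends h)) \<and> ?c (snd (ends g)) = ?c (fst (ends h))"
    have "?d (fst (ends g)) = ?d (snd (ends h))" by (rule comp_lift[OF assms(4) V(1)]) (use c in simp)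
    moreover have "?d (snd (ends g)) = ?d (fst (ends h))" by (rule comp_lift[OF assms(4) V(2)]) (use c in simp)
    ultimately show ?thesis unfolding joined_def by auto
  qed
qed

lemma closure:
  assumes "graph V E ends" "\<gamma> \<subseteq> E" "\<alpha> \<subseteq> E" "d \<in> V"
    "\<forall>g\<in>\<alpha>. fst (ends g) \<notin> comp V ends \<gamma> d \<and> snd (ends g) \<notin> comp V ends \<gamma> d"
    "(d,w) \<in> (adj ends (\<gamma> \<union> \<alpha>))\<^sup>*"
  shows "w \<in> comp V ends \<gamma> d"
  using assms(6)
proof (induction rule: rtrancl_induct)
  case base
  then show ?case using assms(4) by (rule comp_self)
next
  case (step v w)
  from step(2) obtain g where g: "g \<in> \<gamma> \<union> \<alpha>" "ends g = (v,w) \<or> ends g = (w,v)"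
    unfolding adj_def by auto
  have "g \<notin> \<alpha>"
  proof
    assume "g \<in> \<alpha>"
    with assms(5) have "fst (ends g) \<notin> comp V ends \<gamma> d \<and> snd (ends g) \<notin> comp V ends \<gamma> d" by blast
    then show False using g(2) step(3) by auto
  qed
  then have "g \<in> \<gamma>" using g by auto
  then have "(v,w) \<in> adj ends \<gamma>" using g(2) unfolding adj_def by auto
  moreover have "w \<in> V"
  proof -
    have "g \<in> E" using \<open>g \<in> \<gamma>\<close> assms(2) by blast
    then have "fst (ends g) \<in> V \<and> snd (ends g) \<in> V" using assms(1) unfolding graph_def by blast
    then show ?thesis using g(2) by auto
  qed
  ultimately show ?case using step(3) unfolding comp_def by auto
qed

lemma paracel_ext:
  assumes G: "graph V E ends" and eE: "e \<in> E" and fE: "f \<in> E"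
    and P: "paracel V E ends e f \<gamma>" and aS: "\<alpha> \<subseteq> Eef E e f"
    and D: "D = comp V ends \<gamma> (fst (ends e)) \<or> D = comp V ends \<gamma> (snd (ends e))"
    and av: "\<forall>g\<in>\<alpha>. fst (ends g) \<notin> D \<and> snd (ends g) \<notin> D"
  shows "paracel V E ends e f (\<gamma> \<union> \<alpha>)"
proof -
  let ?a = "fst (ends e)" and ?b = "snd (ends e)" and ?F = "\<gamma> \<union> \<alpha>"
  have gS: "\<gamma> \<subseteq> Eef E e f" using P unfolding paracel_def by auto
  have EE: "Eef E e f \<subseteq> E" unfolding Eef_def by auto
  have V: "?a \<in> V" "?b \<in> V" using G eE unfolding graph_def by auto
  have ne: "comp V ends \<gamma> ?a \<noteq> comp V ends \<gamma> ?b" using P unfolding paracel_def by auto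
  have "comp V ends ?F ?a \<noteq> comp V ends ?F ?b"
  proof
    assume eq: "comp V ends ?F ?a = comp V ends ?F ?b"
    from D show False
    proof
      assume D1: "D = comp V ends \<gamma> ?a"
      have "?b \<in> comp V ends ?F ?a" using eq comp_self[OF V(2), of ends ?F] by simp
      then have r1: "(?a, ?b) \<in> (adj ends ?F)\<^sup>*" unfolding comp_def by auto
      have "?b \<in> comp V ends \<gamma> ?a"
        by (rule closure[OF G _ _ V(1) _ r1]) (use gS aS EE av D1 in auto)
      from comp_eq[OF this] ne show False by simp
    next
      assume D2: "D = comp V ends \<gamma> ?b"
      have "?a \<in> comp V ends ?F ?b" using eq comp_self[OF V(1), of ends ?F] by simp
      then have r2: "(?b, ?a) \<in> (adj ends ?F)\<^sup>*" unfolding comp_def by auto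
      have "?a \<in> comp V ends \<gamma> ?b"
        by (rule closure[OF G _ _ V(2) _ r2]) (use gS aS EE av D2 in auto)
      from comp_eq[OF this] ne show False by simp
    qed
  qed
  moreover have "joined V ends ?F f = joined V ends ?F e"
    by (rule joined_lift[OF G fE eE, of \<gamma> ?F]) (use P in \<open>auto simp: paracel_def\<close>)
  ultimately show ?thesis using gS aS unfolding paracel_def by auto
qed

lemma smoot_not_in:
  assumes G: "graph V E ends" and eE: "e \<in> E" and P: "paracel V E ends e f F"
    and gF: "\<gamma> \<subseteq> F" and g: "g \<in> F" "g \<in> E"
    and J: "joined V ends \<gamma> g = joined V ends \<gamma> e"
  shows False
proof -
  have JF: "joined V ends F g = joined V ends F e"
    by (rule joined_lift[OF G g(2) eE gF J])
  obtain x y where xy: "ends g = (x,y)" by (cases "ends g") auto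
  have "snd (ends g) \<in> V" using G g(2) unfolding graph_def by blast
  then have yV: "y \<in> V" using xy by simp
  have "(x,y) \<in> adj ends F" using g(1) xy unfolding adj_def by auto
  then have "y \<in> comp V ends F x" using yV unfolding comp_def by auto
  then have cy: "comp V ends F y = comp V ends F x" by (rule comp_eq)
  have "joined V ends F g = {comp V ends F x}" unfolding joined_def xy using cy by simp
  then have "{comp V ends F (fst (ends e)), comp V ends F (snd (ends e))} = {comp V ends F x}"
    using JF unfolding joined_def by simp
  then have "comp V ends F (fst (ends e)) = comp V ends F (snd (ends e))"
    by (simp add: doubleton_eq_iff)
  then show False using P unfolding paracel_def by auto
qed

theorem proposition4p4:
  fixes V :: "'v set" and E :: "'e set" and ends :: "'e \<Rightarrow> 'v \<times> 'v"
    and e f :: 'e and \<gamma> :: "'e set"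
  assumes "graph V E ends" and "e \<in> E" and "f \<in> E" and "e \<noteq> f"
    and "paracel V E ends e f \<gamma>"
  shows "\<exists>!p. (case p of (\<beta>, m) \<Rightarrow>
            \<beta> \<subseteq> Eef E e f \<and> \<beta> \<inter> \<gamma> = {} \<and> m \<in> Bset V E ends e f \<beta> \<gamma> \<and>
            xmon \<beta> + xmon \<gamma> + m = xmon (Eef E e f))"
proof -
  let ?a = "fst (ends e)" and ?b = "snd (ends e)"
  define C1 where "C1 = comp V ends \<gamma> ?a"
  define C2 where "C2 = comp V ends \<gamma> ?b"
  define R where "R = Eef E e f - \<gamma>"
  define \<beta> where "\<beta> = {g. smoot V E ends e f \<gamma> g}"
  define \<alpha>2 where "\<alpha>2 = {g \<in> R - \<beta>. fst (ends g) \<in> C2 \<or> snd (ends g) \<in> C2}"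
  define \<alpha>1 where "\<alpha>1 = R - \<beta> - \<alpha>2"
  note G = assms(1)
  have finE: "finite E" using G unfolding graph_def by auto
  have EE: "Eef E e f \<subseteq> E" unfolding Eef_def by auto
  have finEef: "finite (Eef E e f)" using finite_subset[OF EE finE] .
  have gS: "\<gamma> \<subseteq> Eef E e f" using assms(5) unfolding paracel_def by auto
  have ne: "C1 \<noteq> C2" using assms(5) unfolding paracel_def C1_def C2_def by auto
  have cC1: "\<And>v. v \<in> C1 \<Longrightarrow> comp V ends \<gamma> v = C1" unfolding C1_def by (rule comp_eq)
  have cC2: "\<And>v. v \<in> C2 \<Longrightarrow> comp V ends \<gamma> v = C2" unfolding C2_def by (rule comp_eq)
  have nC: "\<And>v. v \<in> C1 \<Longrightarrow> v \<notin> C2"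
  proof
    fix v assume "v \<in> C1" "v \<in> C2"
    then have "comp V ends \<gamma> v = C1" "comp V ends \<gamma> v = C2" using cC1 cC2 by auto
    then show False using ne by simp
  qed
  have je: "joined V ends \<gamma> e = {C1, C2}" unfolding joined_def C1_def C2_def ..
  have bS: "\<beta> \<subseteq> R" unfolding \<beta>_def R_def smoot_def by auto
  have RS: "R \<subseteq> Eef E e f" "R \<inter> \<gamma> = {}" unfolding R_def by auto
  have a2S: "\<alpha>2 \<subseteq> R - \<beta>" unfolding \<alpha>2_def by auto
  have a1S: "\<alpha>1 \<subseteq> R - \<beta>" unfolding \<alpha>1_def by auto
  have av1: "\<forall>g\<in>\<alpha>1. fst (ends g) \<notin> C2 \<and> snd (ends g) \<notin> C2"
    unfolding \<alpha>1_def \<alpha>2_def by auto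
  have av2: "\<forall>g\<in>\<alpha>2. fst (ends g) \<notin> C1 \<and> snd (ends g) \<notin> C1"
  proof
    fix g assume g: "g \<in> \<alpha>2"
    then have gR: "g \<in> R" "g \<notin> \<beta>" and h: "fst (ends g) \<in> C2 \<or> snd (ends g) \<in> C2"
      by (auto simp: \<alpha>2_def)
    show "fst (ends g) \<notin> C1 \<and> snd (ends g) \<notin> C1"
    proof (rule ccontr)
      assume "\<not> ?thesis"
      then have "fst (ends g) \<in> C1 \<or> snd (ends g) \<in> C1" by auto
      then have "fst (ends g) \<in> C1 \<and> snd (ends g) \<in> C2 \<or> fst (ends g) \<in> C2 \<and> snd (ends g) \<in> C1"
        using h nC by blast
      then have "joined V ends \<gamma> g = {C1, C2}"
      proof
        assume "fst (ends g) \<in> C1 \<and> snd (ends g) \<in> C2"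
        then show ?thesis unfolding joined_def using cC1 cC2 by simp
      next
        assume "fst (ends g) \<in> C2 \<and> snd (ends g) \<in> C1"
        then show ?thesis unfolding joined_def using cC1 cC2 by (simp add: insert_commute)
      qed
      then have "smoot V E ends e f \<gamma> g" using gR je unfolding smoot_def R_def by auto
      then show False using gR \<beta>_def by auto
    qed
  qed
  have smF: "\<forall>g\<in>\<beta>. smoot V E ends e f (\<gamma> \<union> \<alpha>) g" if "\<alpha> \<inter> \<beta> = {}" for \<alpha>
  proof
    fix g assume g: "g \<in> \<beta>"
    then have g1: "g \<in> Eef E e f - \<gamma>" "joined V ends \<gamma> g = joined V ends \<gamma> e"
      unfolding \<beta>_def smoot_def by auto
    have "joined V ends (\<gamma> \<union> \<alpha>) g = joined V ends (\<gamma> \<union> \<alpha>) e"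
      by (rule joined_lift[OF G _ assms(2) _ g1(2)]) (use g1 EE in auto)
    then show "smoot V E ends e f (\<gamma> \<union> \<alpha>) g" using g1 g that unfolding smoot_def by auto
  qed
  have P1: "paracel V E ends e f (\<gamma> \<union> \<alpha>1)"
    by (rule paracel_ext[OF G assms(2,3,5) _ _ av1]) (use a1S RS in \<open>auto simp: C2_def\<close>)
  have P2: "paracel V E ends e f (\<gamma> \<union> \<alpha>2)"
    by (rule paracel_ext[OF G assms(2,3,5) _ _ av2]) (use a2S RS in \<open>auto simp: C1_def\<close>)
  have A1: "\<alpha>1 \<in> Aset V E ends e f \<beta> \<gamma>"
    unfolding Aset_def compatible_def using P1 smF[of \<alpha>1] a1S RS by auto
  have A2: "\<alpha>2 \<in> Aset V E ends e f \<beta> \<gamma>"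
    unfolding Aset_def compatible_def using P2 smF[of \<alpha>2] a2S RS by auto
  have A0: "{} \<in> Aset V E ends e f \<beta> \<gamma>"
    unfolding Aset_def compatible_def using assms(5) smF[of "{}"] by auto
  have dis12: "\<alpha>1 \<inter> \<alpha>2 = {}" unfolding \<alpha>1_def by auto
  define m0 where "m0 = xmon \<alpha>1 + xmon \<alpha>2"
  have B: "m0 \<in> Bset V E ends e f \<beta> \<gamma>"
    unfolding Bset_def m0_def twins_def
    by (rule CollectI, rule exI[of _ \<alpha>1], rule exI[of _ \<alpha>2]) (simp add: A1 A2 dis12 A0)
  have RS': "\<beta> \<subseteq> Eef E e f" "\<alpha>1 \<subseteq> Eef E e f" "\<alpha>2 \<subseteq> Eef E e f"
    using bS a1S a2S RS by auto
  have fins: "finite \<beta>" "finite \<gamma>" "finite \<alpha>1" "finite \<alpha>2" "finite R"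
    using finite_subset[OF RS'(1) finEef] finite_subset[OF gS finEef]
      finite_subset[OF RS'(2) finEef] finite_subset[OF RS'(3) finEef] finite_subset[OF RS(1) finEef]
    by auto
  have sum0: "xmon \<beta> + xmon \<gamma> + m0 = xmon (Eef E e f)"
  proof -
    have e1: "Eef E e f = (\<beta> \<union> \<gamma>) \<union> (\<alpha>1 \<union> \<alpha>2)"
      unfolding \<alpha>1_def using bS a2S gS R_def by blast
    have d1: "(\<beta> \<union> \<gamma>) \<inter> (\<alpha>1 \<union> \<alpha>2) = {}" using a1S a2S RS by blast
    have d2: "\<beta> \<inter> \<gamma> = {}" using bS RS by blast
    have "xmon (Eef E e f) = mset_set (\<beta> \<union> \<gamma>) + mset_set (\<alpha>1 \<union> \<alpha>2)"
      unfolding xmon_def e1 by (rule mset_set_Union) (use fins d1 in auto)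
    also have "\<dots> = xmon \<beta> + xmon \<gamma> + m0"
      unfolding xmon_def m0_def using fins d2 dis12 by (simp add: mset_set_Union)
    finally show ?thesis by simp
  qed
  show ?thesis
  proof (rule ex1I[of _ "(\<beta>, m0)"])
    show "case (\<beta>, m0) of (\<beta>, m) \<Rightarrow> \<beta> \<subseteq> Eef E e f \<and> \<beta> \<inter> \<gamma> = {} \<and>
        m \<in> Bset V E ends e f \<beta> \<gamma> \<and> xmon \<beta> + xmon \<gamma> + m = xmon (Eef E e f)"
      using bS RS B sum0 by auto
  next
    fix p assume "case p of (\<beta>, m) \<Rightarrow> \<beta> \<subseteq> Eef E e f \<and> \<beta> \<inter> \<gamma> = {} \<and>
        m \<in> Bset V E ends e f \<beta> \<gamma> \<and> xmon \<beta> + xmon \<gamma> + m = xmon (Eef E e f)"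
    then obtain \<beta>' m where p: "p = (\<beta>', m)" and h: "\<beta>' \<subseteq> Eef E e f" "\<beta>' \<inter> \<gamma> = {}"
      "m \<in> Bset V E ends e f \<beta>' \<gamma>" "xmon \<beta>' + xmon \<gamma> + m = xmon (Eef E e f)"
      by (cases p) auto
    from h(3) obtain a a' where m: "m = xmon a + xmon a'" and tw: "twins V E ends e f \<beta>' \<gamma> a a'"
      unfolding Bset_def by auto
    have ca: "compatible V E ends e f \<beta>' \<gamma> a" "compatible V E ends e f \<beta>' \<gamma> a'"
      "compatible V E ends e f \<beta>' \<gamma> (a \<inter> a')"
      using tw unfolding twins_def Aset_def by auto
    have aS: "a \<subseteq> Eef E e f" "a' \<subseteq> Eef E e f" using ca unfolding compatible_def by auto
    have fa: "finite a" "finite a'" "finite \<beta>'"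
      using finite_subset[OF aS(1) finEef] finite_subset[OF aS(2) finEef] finite_subset[OF h(1) finEef]
      by auto
    have cnt: "\<And>x. (if x \<in> \<beta>' then 1 else 0) + (if x \<in> \<gamma> then 1 else 0) +
        ((if x \<in> a then 1 else 0) + (if x \<in> a' then 1 else 0)) = (if x \<in> Eef E e f then (1::nat) else 0)"
    proof -
      fix x
      have "count (xmon \<beta>' + xmon \<gamma> + m) x = count (xmon (Eef E e f)) x" using h(4) by simp
      then show "(if x \<in> \<beta>' then 1 else 0) + (if x \<in> \<gamma> then 1 else 0) +
        ((if x \<in> a then 1 else 0) + (if x \<in> a' then 1 else 0)) = (if x \<in> Eef E e f then (1::nat) else 0)"
        unfolding m xmon_def using fa fins finEef by (simp only: count_mset_set' count_union) simp
    qed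
    have "a \<inter> a' = {}"
    proof (rule ccontr)
      assume "a \<inter> a' \<noteq> {}"
      then obtain x where "x \<in> a" "x \<in> a'" by auto
      then show False using cnt[of x] by (auto split: if_splits)
    qed
    then have "\<forall>g\<in>\<beta>'. smoot V E ends e f \<gamma> g" using ca(3) unfolding compatible_def by auto
    then have sub1: "\<beta>' \<subseteq> \<beta>" unfolding \<beta>_def by auto
    have sub2: "\<beta> \<subseteq> \<beta>'"
    proof
      fix g assume g: "g \<in> \<beta>"
      then have g1: "g \<in> Eef E e f" "g \<notin> \<gamma>" "joined V ends \<gamma> g = joined V ends \<gamma> e"
        unfolding \<beta>_def smoot_def by auto
      have na: "g \<notin> c" if "compatible V E ends e f \<beta>' \<gamma> c" for c
      proof
        assume gc: "g \<in> c"
        have "paracel V E ends e f (\<gamma> \<union> c)" using that unfolding compatible_def by auto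
        show False
          by (rule smoot_not_in[OF G assms(2) \<open>paracel V E ends e f (\<gamma> \<union> c)\<close> _ _ _ g1(3)])
            (use gc g1 EE in auto)
      qed
      show "g \<in> \<beta>'" using cnt[of g] g1 na[OF ca(1)] na[OF ca(2)] by (auto split: if_splits)
    qed
    have bb: "\<beta>' = \<beta>" using sub1 sub2 by auto
    have "xmon \<beta> + xmon \<gamma> + m = xmon \<beta> + xmon \<gamma> + m0" using h(4) sum0 bb by simp
    then have "m = m0" by simp
    then show "p = (\<beta>, m0)" using p bb by simp
  qed
qed

end
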